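(* Let $f:\mathbb{R}\to\mathbb{R}$, $m:\mathbb{R}\to\mathbb{R}^n$ and $g:\mathbb{R}^n\times\mathbb{R}\times\mathbb{R}\to\mathbb{R}^{n\times m}$ satisfy: (i) $f$ is bounded and continuous and there are a function $M$ with $M(s)/s\to0$ as $s\to+\infty$ and a constant $f^\star<0$ such that $f^\star=\lim_{T\to+\infty}\frac{1}{2T}\int_{-T}^Tf(s)\,\mathrm{d}s$ and $\left|\int_{t_1}^{t_2}[f(s)-f^\star]\,\mathrm{d}s\right|\le M(t_2-t_1)$ whenever $t_2\ge t_1$; (ii) $m$ is continuous with $|m(t)|=1$ for all $t\in\mathbb{R}$, and there are constants $\alpha',\beta',\tilde c>0$ such that for all $t\in\mathbb{R}$, $\alpha>0$, $x\in\mathbb{R}^n$: $\alpha' I\le\int_t^{t+\tilde c}m(\tau)m^T(\tau)\,\mathrm{d}\tau\le\beta' I$ and $\|g(x,t,\alpha t)\|\le\beta'\{1+\sqrt{|x|}\}$; (iii) $g$ is continuous and $C^1$ in $x$, and there is $K>1$ with $|\partial g_{ij}(x,t,\alpha t)/\partial x|\le K$ for all $x$, $t\ge0$, $\alpha>0$ and all entries $g_{ij}$. Let $\kappa=\tilde c/(2|f^\star|)+\frac{1}{4\alpha'}\tilde c^4|f^\star|$ and $$P(t)=\kappa I+\int_{t-\tilde c}^t\int_s^t m(l)m^T(l)\,\mathrm{d}l\,\mathrm{d}s.$$ Then $V(x,t)=x^TP(t)x$ is a Lyapunov function for $\dot x=f^\star m(t)m^T(t)x$, and $W:=2V/\alpha'$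 admits constants $c_1,c_2,c_3>0$ such that for all $t\ge0$ and $\xi\in\mathbb{R}^n$: $c_1|\xi|^2\le W(\xi,t)\le c_2|\xi|^2$, $|W_\xi(\xi,t)|\le c_3|\xi|$, and $W_t(\xi,t)+W_\xi(\xi,t)f^\star m(t)m^T(t)\xi\le-|\xi|^2$.
   Context: $I$ is the $n\times n$ identity matrix, $\|\cdot\|$ the matrix 2-norm, and matrix inequalities are in the positive semidefinite order. A Lyapunov function for $\dot x=F(x,t)$ is a $C^1$ function $V:\mathbb{R}^n\times[0,\infty)\to[0,\infty)$ with $\delta_1,\delta_2\in\mathcal{K}_\infty$, $\delta_3\in\mathcal{K}$ such that $\delta_1(|\xi|)\le V(\xi,t)\le\delta_2(|\xi|)$ and $V_t+V_\xi F(\xi,t)\le-\delta_3(|\xi|)$ for all $\xi$, $t\ge0$ ($\mathcal{K}$: continuous, zero only at 0, strictly increasing; $\mathcal{K}_\infty$: also unbounded). *)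

theory Defs
  imports "HOL-Analysis.Analysis"
begin

definition outer :: "real^'n \<Rightarrow> real^'n^'n" where
  "outer v = (\<chi> i j. v $ i * v $ j)"

definition psd_le :: "real^'n^'n \<Rightarrow> real^'n^'n \<Rightarrow> bool" where
  "psd_le A B \<longleftrightarrow> (\<forall>x. x \<bullet> (A *v x) \<le> x \<bullet> (B *v x))"

definition mat_norm2 :: "real^'m^'n \<Rightarrow> real" where
  "mat_norm2 A = onorm (\<lambda>x. A *v x)"

definition class_K :: "(real \<Rightarrow> real) \<Rightarrow> bool" where
  "class_K d \<longleftrightarrow> continuous_on {0..} d \<and> d 0 = 0 \<and> strict_mono_on {0..} d"

definition class_K_inf :: "(real \<Rightarrow> real) \<Rightarrow> bool" where
  "class_K_inf d \<longleftrightarrow> class_K d \<and> filterlim d at_top at_top"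

definition C1_partials ::
  "(real^'n \<Rightarrow> real \<Rightarrow> real) \<Rightarrow> (real^'n \<Rightarrow> real \<Rightarrow> real^'n) \<Rightarrow> (real^'n \<Rightarrow> real \<Rightarrow> real) \<Rightarrow> bool" where
  "C1_partials V Vx Vt \<longleftrightarrow>
     (\<forall>\<xi> t. t \<ge> 0 \<longrightarrow>
        ((\<lambda>(x, s). V x s) has_derivative (\<lambda>(h, k). Vx \<xi> t \<bullet> h + Vt \<xi> t * k))
          (at (\<xi>, t) within UNIV \<times> {0..})) \<and>
     continuous_on (UNIV \<times> {0..}) (\<lambda>(\<xi>, t). Vx \<xi> t) \<and>
     continuous_on (UNIV \<times> {0..}) (\<lambda>(\<xi>, t). Vt \<xi> t)"

definition lyapunov_function ::
  "(real^'n \<Rightarrow> real \<Rightarrow> real) \<Rightarrow> (real^'n \<Rightarrow> real \<Rightarrow> real^'n) \<Rightarrow> bool" where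
  "lyapunov_function V F \<longleftrightarrow>
     (\<exists>Vx Vt d1 d2 d3. C1_partials V Vx Vt \<and>
        class_K_inf d1 \<and> class_K_inf d2 \<and> class_K d3 \<and>
        (\<forall>\<xi> t. t \<ge> 0 \<longrightarrow>
           0 \<le> V \<xi> t \<and> d1 (norm \<xi>) \<le> V \<xi> t \<and> V \<xi> t \<le> d2 (norm \<xi>) \<and>
           Vt \<xi> t + Vx \<xi> t \<bullet> F \<xi> t \<le> - d3 (norm \<xi>)))"

definition kappa :: "real \<Rightarrow> real \<Rightarrow> real \<Rightarrow> real" where
  "kappa c fstar \<alpha>' = c / (2 * \<bar>fstar\<bar>) + 1 / (4 * \<alpha>') * c ^ 4 * \<bar>fstar\<bar>"

definition Pmat :: "real \<Rightarrow> real \<Rightarrow> (real \<Rightarrow> real^'n) \<Rightarrow> real \<Rightarrow> real^'n^'n" where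
  "Pmat \<kappa> c m t = \<kappa> *\<^sub>R mat 1 +
     integral {t - c..t} (\<lambda>s. integral {s..t} (\<lambda>l. outer (m l)))"

end

theory Submission
  imports Defs
begin


lemma bb_mv: "bounded_bilinear (\<lambda>(A::real^'n^'n) (x::real^'n). A *v x)"
  unfolding bilinear_conv_bounded_bilinear[symmetric] bilinear_def
  by (auto intro!: linearI simp: matrix_vector_mult_add_rdistrib matrix_vector_right_distrib
      scaleR_matrix_vector_assoc[symmetric] matrix_vector_mult_scaleR)

lemma outer_mv: "outer v *v z = (v \<bullet> z) *\<^sub>R (v::real^'n)"
  by (simp add: vec_eq_iff outer_def matrix_vector_mult_def inner_vec_def sum_distrib_left
      mult.commute mult.left_commute)

lemma inner_outer: "y \<bullet> (outer v *v z) = (y \<bullet> v) * (v \<bullet> (z::real^'n))"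
  by (simp add: outer_mv)

lemma bl_quad: "bounded_linear (\<lambda>A::real^'n^'n. y \<bullet> (A *v z))"
  using bounded_linear_compose[OF bounded_linear_inner_right[of y]
      bounded_bilinear.bounded_linear_left[OF bb_mv, of z]] by simp

lemma inner_int: "(f :: real \<Rightarrow> real^'n^'n) integrable_on S \<Longrightarrow>
   y \<bullet> (integral S f *v z) = integral S (\<lambda>s. y \<bullet> (f s *v z))"
  using integral_linear[OF _ bl_quad, of f S y z] by (simp add: o_def)

lemma outer_cont: "continuous_on UNIV (m::real \<Rightarrow> real^'n) \<Longrightarrow> continuous_on UNIV (\<lambda>t. outer (m t))"
  unfolding outer_def
  by (intro continuous_on_vec_lambda continuous_intros) auto



definition Qm :: "real \<Rightarrow> (real \<Rightarrow> real^'n) \<Rightarrow> real \<Rightarrow> real^'n^'n" where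
  "Qm c m t = integral {t - c..t} (\<lambda>s. integral {s..t} (\<lambda>l. outer (m l)))"

lemma int_lin: "integral {t - c..t} (\<lambda>s. (t - s) * B) = c^2/2 * B" if "c \<ge> 0" for B :: real
proof -
  define F where "F = (\<lambda>s::real. (t * s - s * s / 2) * B)"
  have "((\<lambda>s. (t - s) * B) has_integral (F t - F (t - c))) {t-c..t}"
  proof (rule fundamental_theorem_of_calculus)
    fix x show "(F has_vector_derivative (t - x) * B) (at x within {t - c..t})"
      unfolding F_def has_real_derivative_iff_has_vector_derivative[symmetric]
      by (auto intro!: derivative_eq_intros simp: algebra_simps)
  qed (use that in auto)
  moreover have "F t - F (t - c) = c^2/2 * B" by (simp add: F_def power2_eq_square field_simps)
  ultimately show ?thesis by (metis integral_unique)
qed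

context
  fixes m :: "real \<Rightarrow> real^'n" and c :: real
  assumes mc: "continuous_on UNIV m" and mu: "\<And>t. norm (m t) = 1" and cpos: "c > 0"
begin

lemma h_cont: "continuous_on S (\<lambda>t. outer (m t))"
  using outer_cont[OF mc] continuous_on_subset by blast

lemma h_int: "(\<lambda>t. outer (m t)) integrable_on {a..b}"
  by (rule integrable_continuous_interval[OF h_cont])

lemma phi_cont: "continuous_on S (\<lambda>l. (y \<bullet> m l) * (m l \<bullet> z))"
  using mc by (intro continuous_intros) (auto intro: continuous_on_subset)

lemma phi_int: "(\<lambda>l. (y \<bullet> m l) * (m l \<bullet> z)) integrable_on {a..b}"
  by (rule integrable_continuous_interval[OF phi_cont])

lemma inner_h_int: "(\<lambda>s. integral {s..t} (\<lambda>l. outer (m l))) integrable_on {a..t}"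
  by (rule integrable_continuous_interval[OF indefinite_integral_continuous_1'[OF h_int]])

lemma inner_phi_int: "(\<lambda>s. integral {s..t} (\<lambda>l. (y \<bullet> m l) * (m l \<bullet> z))) integrable_on {a..t}"
  by (rule integrable_continuous_interval[OF indefinite_integral_continuous_1'[OF phi_int]])

lemma Q_bil: "y \<bullet> (Qm c m t *v z) = integral {t-c..t} (\<lambda>s. integral {s..t} (\<lambda>l. (y \<bullet> m l) * (m l \<bullet> z)))"
  unfolding Qm_def inner_int[OF inner_h_int] inner_int[OF h_int] inner_outer ..

lemma Q_bound: "\<bar>y \<bullet> (Qm c m t *v z)\<bar> \<le> c^2/2 * (norm y * norm z)"
proof -
  have "norm (integral {t-c..t} (\<lambda>s. integral {s..t} (\<lambda>l. (y \<bullet> m l) * (m l \<bullet> z))))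
     \<le> integral {t-c..t} (\<lambda>s. (t - s) * (norm y * norm z))"
  proof (rule integral_norm_bound_integral[OF inner_phi_int])
    show "(\<lambda>s. (t - s) * (norm y * norm z)) integrable_on {t - c..t}"
      by (intro integrable_continuous_interval continuous_intros)
    fix s assume s: "s \<in> {t-c..t}"
    have "norm (integral {s..t} (\<lambda>l. (y \<bullet> m l) * (m l \<bullet> z))) \<le> integral {s..t} (\<lambda>l. norm y * norm z)"
    proof (rule integral_norm_bound_integral[OF phi_int])
      fix l
      have "\<bar>y \<bullet> m l\<bar> \<le> norm y" using Cauchy_Schwarz_ineq2[of y "m l"] mu by simp
      moreover have "\<bar>m l \<bullet> z\<bar> \<le> norm z" using Cauchy_Schwarz_ineq2[of "m l" z] mu by simp
      ultimately show "norm ((y \<bullet> m l) * (m l \<bullet> z)) \<le> norm y * norm z"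
        by (simp add: abs_mult mult_mono')
    qed auto
    then show "norm (integral {s..t} (\<lambda>l. (y \<bullet> m l) * (m l \<bullet> z))) \<le> (t - s) * (norm y * norm z)"
      using s by (simp add: ac_simps)
  qed
  then show ?thesis unfolding Q_bil real_norm_def int_lin[OF less_imp_le[OF cpos]] .
qed

lemma Q_nonneg: "0 \<le> x \<bullet> (Qm c m t *v x)"
  unfolding Q_bil
  by (intro integral_nonneg inner_phi_int phi_int) (auto simp: inner_commute)

end


definition Qd :: "real \<Rightarrow> (real \<Rightarrow> real^'n) \<Rightarrow> real \<Rightarrow> real^'n^'n" where
  "Qd c m t = c *\<^sub>R outer (m t) - integral {t - c..t} (\<lambda>l. outer (m l))"

lemma Pmat_Q: "Pmat k c m t = k *\<^sub>R mat 1 + Qm c m t"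
  by (simp add: Pmat_def Qm_def)

lemma shift_der:
  assumes "(G has_vector_derivative G') (at (t - c))"
  shows "((\<lambda>t. G (t - c)) has_vector_derivative G') (at t)"
proof -
  have "((\<lambda>t. t - c) has_vector_derivative 1) (at t)"
    unfolding has_real_derivative_iff_has_vector_derivative[symmetric]
    by (auto intro!: derivative_eq_intros)
  from vector_diff_chain_at[OF this, of G G'] assms show ?thesis by (simp add: o_def)
qed

lemma interior_der:
  assumes "a < u" "(F has_vector_derivative F') (at u within {a..u+1})"
  shows "(F has_vector_derivative F') (at u)"
proof -
  have "u \<in> {a<..<u+1}" using assms(1) by simp
  then have "u \<in> interior {a..u+1}" by (simp only: interior_atLeastAtMost_real)
  from assms(2) show ?thesis unfolding at_within_interior[OF \<open>u \<in> interior {a..u+1}\<close>] .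
qed

context
  fixes m :: "real \<Rightarrow> real^'n" and c :: real
  assumes mc: "continuous_on UNIV m" and mu: "\<And>t. norm (m t) = 1" and cpos: "c > 0"
begin

definition "aa = - c - 1"
definition "HH u = integral {aa..u} (\<lambda>l. outer (m l))"
definition "KK u = integral {aa..u} HH"

lemma HH_cont: "continuous_on {aa..b} HH"
  using indefinite_integral_continuous_1[OF h_int[OF mc mu cpos], of aa b] unfolding HH_def .

lemma HH_der: "aa < u \<Longrightarrow> (HH has_vector_derivative outer (m u)) (at u)"
  unfolding HH_def
  by (rule interior_der, assumption, rule integral_has_vector_derivative[OF h_cont[OF mc mu cpos]]) auto

lemma KK_der: "aa < u \<Longrightarrow> (KK has_vector_derivative HH u) (at u)"
  unfolding KK_def
  by (rule interior_der, assumption, rule integral_has_vector_derivative[OF HH_cont]) auto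

lemma HH_diff: "aa \<le> s \<Longrightarrow> s \<le> t \<Longrightarrow> integral {s..t} (\<lambda>l. outer (m l)) = HH t - HH s"
  unfolding HH_def using Henstock_Kurzweil_Integration.integral_combine[OF _ _ h_int[OF mc mu cpos], of aa s t] by (simp add: algebra_simps)

lemma HH_int: "HH integrable_on {a..b}" if "aa \<le> a"
  by (rule integrable_continuous_interval, rule continuous_on_subset[OF HH_cont[of b]]) (use that in auto)

lemma KK_diff: "aa \<le> s \<Longrightarrow> s \<le> t \<Longrightarrow> integral {s..t} HH = KK t - KK s"
  unfolding KK_def using Henstock_Kurzweil_Integration.integral_combine[OF _ _ HH_int[OF order_refl], of s t] by (simp add: algebra_simps)

lemma aa_lt: "t \<ge> 0 \<Longrightarrow> aa < t - c" unfolding aa_def by simp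

lemma Q_repr: "t \<ge> 0 \<Longrightarrow> Qm c m t = c *\<^sub>R HH t - (KK t - KK (t - c))"
proof -
  assume t: "t \<ge> 0"
  have "Qm c m t = integral {t-c..t} (\<lambda>s. HH t - HH s)"
    unfolding Qm_def by (rule integral_cong, rule HH_diff) (use aa_lt[OF t] in auto)
  also have "\<dots> = integral {t-c..t} (\<lambda>s. HH t) - integral {t-c..t} HH"
    by (rule integral_diff) (use aa_lt[OF t] in \<open>auto intro!: HH_int\<close>)
  also have "\<dots> = c *\<^sub>R HH t - (KK t - KK (t - c))"
    using KK_diff[of "t-c" t] aa_lt[OF t] cpos by simp
  finally show ?thesis .
qed

lemma Qd_repr: "t \<ge> 0 \<Longrightarrow> Qd c m t = c *\<^sub>R outer (m t) - (HH t - HH (t - c))"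
  unfolding Qd_def using HH_diff[of "t-c" t] aa_lt[of t] cpos by simp

lemma R_der: "t \<ge> 0 \<Longrightarrow> ((\<lambda>t. c *\<^sub>R HH t - (KK t - KK (t - c))) has_vector_derivative
     (c *\<^sub>R outer (m t) - (HH t - HH (t - c)))) (at t)"
proof -
  assume t: "t \<ge> 0"
  have "((\<lambda>x. c *\<^sub>R HH x) has_vector_derivative c *\<^sub>R outer (m t)) (at t)"
    using has_vector_derivative_scaleR[OF DERIV_const HH_der, of t c] aa_lt[OF t] cpos by simp
  then show ?thesis
    using aa_lt[OF t] cpos
    by (intro has_vector_derivative_diff KK_der shift_der) auto
qed

lemma Q_der: "t \<ge> 0 \<Longrightarrow> (Qm c m has_vector_derivative Qd c m t) (at t within {0..})"
  unfolding Qd_repr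
  by (rule has_vector_derivative_transform[of t "{0..}" _ "\<lambda>t. c *\<^sub>R HH t - (KK t - KK (t - c))"])
     (auto simp: Q_repr intro: has_vector_derivative_at_within R_der)

lemma Qd_cont: "continuous_on {0..} (Qd c m)"
proof -
  have "isCont (\<lambda>t. HH t - HH (t - c)) t" if t: "t \<ge> 0" for t
    using aa_lt[OF t] cpos
    by (intro continuous_diff has_vector_derivative_continuous[OF HH_der]
          has_vector_derivative_continuous[OF shift_der[OF HH_der]]) auto
  then have "continuous_on {0..} (\<lambda>t. HH t - HH (t - c))"
    by (intro continuous_at_imp_continuous_on) auto
  then have "continuous_on {0..} (\<lambda>t. c *\<^sub>R outer (m t) - (HH t - HH (t - c)))"
    by (rule continuous_on_diff[OF continuous_on_scaleR[OF continuous_on_const h_cont[OF mc mu cpos]]])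
  then show ?thesis by (rule continuous_on_eq) (simp add: Qd_repr)
qed

lemma P_der: "t \<ge> 0 \<Longrightarrow> (Pmat k c m has_vector_derivative Qd c m t) (at t within {0..})"
  unfolding Pmat_Q[abs_def]
  using has_vector_derivative_add[OF has_vector_derivative_const Q_der] by simp

lemma P_cont: "continuous_on {0..} (Pmat k c m)"
  using P_der by (auto simp: continuous_on_eq_continuous_within intro: has_vector_derivative_continuous)

end


lemma transpose_add': "transpose (A + B) = transpose A + transpose (B::real^'n^'m)"
  by (simp add: transpose_def vec_eq_iff)
lemma bb_tmv: "bounded_bilinear (\<lambda>(A::real^'n^'n) (x::real^'n). transpose A *v x)"
  unfolding bilinear_conv_bounded_bilinear[symmetric] bilinear_def
  by (auto intro!: linearI simp: matrix_vector_mult_add_rdistrib matrix_vector_right_distrib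
      scaleR_matrix_vector_assoc[symmetric] matrix_vector_mult_scaleR transpose_add' transpose_scalar simp del: transpose_matrix_vector)

lemma classK_sq: "a > 0 \<Longrightarrow> class_K_inf (\<lambda>r::real. a * r^2)"
  unfolding class_K_inf_def class_K_def
proof (intro conjI)
  assume a: "a > 0"
  show "continuous_on {0..} (\<lambda>r::real. a * r^2)" by (intro continuous_intros)
  show "a * 0^2 = 0" by simp
  show "strict_mono_on {0..} (\<lambda>r::real. a * r^2)"
    by (rule strict_mono_onI) (use a in \<open>auto intro!: mult_strict_left_mono power_strict_mono\<close>)
  show "filterlim (\<lambda>r::real. a * r^2) at_top at_top"
    by (rule filterlim_tendsto_pos_mult_at_top[OF tendsto_const a], rule filterlim_pow_at_top[OF _ filterlim_ident]) simp
qed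

lemma norm_from_inner:
  fixes v :: "'a::real_inner"
  assumes "v \<bullet> v \<le> B * norm v" "B \<ge> 0"
  shows "norm v \<le> B"
proof (cases "norm v = 0")
  case True then show ?thesis using assms by simp
next
  case False
  then have "norm v * norm v \<le> B * norm v" using assms by (simp add: dot_square_norm power2_eq_square)
  then show ?thesis using False by (simp add: mult_le_cancel_right)
qed

lemma key_ineq:
  fixes al phi c y N Aq a1 a2 :: real
  assumes "al > 0" "phi > 0" "c > 0" "Aq \<ge> al * N^2" "\<bar>a1\<bar> \<le> c^2/2 * N" "\<bar>a2\<bar> \<le> c^2/2 * N" "N \<ge> 0"
  shows "c * y^2 - Aq + (- phi) * (y * (2 * (c / (2 * \<bar>-phi\<bar>) + 1 / (4 * al) * c ^ 4 * \<bar>-phi\<bar>) * y + a1 + a2))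
     \<le> - (al / 2) * N^2"
proof -
  define K2 where "K2 = 2 * (c / (2 * \<bar>-phi\<bar>) + 1 / (4 * al) * c ^ 4 * \<bar>-phi\<bar>)"
  have k2: "phi * K2 = c + c^4 * phi^2 / (2*al)"
    unfolding K2_def using assms(1,2) by (simp add: field_simps power2_eq_square)
  have e: "(- phi) * (y * (K2 * y + a1 + a2)) = - (phi * K2) * y^2 - phi * y * (a1 + a2)"
    by (simp add: algebra_simps power2_eq_square)
  have b: "phi * y * (a1 + a2) \<ge> - phi * \<bar>y\<bar> * (c^2 * N)"
  proof -
    have "\<bar>y * (a1 + a2)\<bar> \<le> \<bar>y\<bar> * (c^2 * N)"
      unfolding abs_mult using assms(5,6) by (intro mult_left_mono) auto
    then have "y * (a1 + a2) \<ge> - (\<bar>y\<bar> * (c^2 * N))" by linarith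
    then have "phi * (y * (a1 + a2)) \<ge> phi * (- (\<bar>y\<bar> * (c^2 * N)))"
      using assms(2) by (intro mult_left_mono) auto
    then show ?thesis by (simp add: mult.assoc)
  qed
  define z where "z = \<bar>y\<bar>"
  have yz: "y^2 = z^2" unfolding z_def by simp
  have sq: "0 \<le> (c^2 * phi * z - al * N)^2 / (2 * al)" using assms(1) by simp
  have id: "(c^2 * phi * z - al * N)^2 / (2 * al) = c^4 * phi^2 / (2*al) * z^2 + al/2 * N^2 - phi * z * (c^2 * N)"
    using assms(1) by (simp add: power2_eq_square divide_simps) (simp add: algebra_simps eval_nat_numeral)
  show ?thesis
    unfolding K2_def[symmetric] e k2 using b sq id assms(4) unfolding yz z_def[symmetric]
    by (simp add: algebra_simps)
qed


context
  fixes m :: "real \<Rightarrow> real^'n" and c :: real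
  assumes mc: "continuous_on UNIV m" and mu: "\<And>t. norm (m t) = 1" and cpos: "c > 0"
begin

lemma inner_vm: "a \<bullet> (x v* A) = x \<bullet> (A *v (a::real^'n))"
  by (metis inner_commute dot_lmul_matrix)

lemma V_der:
  assumes t: "t \<ge> 0"
  shows "((\<lambda>(x, s). x \<bullet> (Pmat k c m s *v x)) has_derivative
     (\<lambda>(h, q). (Pmat k c m t *v \<xi> + transpose (Pmat k c m t) *v \<xi>) \<bullet> h + (\<xi> \<bullet> (Qd c m t *v \<xi>)) * q))
     (at (\<xi>, t) within UNIV \<times> {0..})"
proof -
  let ?P = "Pmat k c m"
  let ?S = "UNIV \<times> {0::real..} :: ((real^'n) \<times> real) set"
  have d1: "(?P has_derivative (\<lambda>q. q *\<^sub>R Qd c m t)) (at t within {0..})"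
    using P_der[OF mc mu cpos t] by (simp add: has_vector_derivative_def)
  have im: "snd ` ?S = {0..}" by force
  have d2: "((?P \<circ> snd) has_derivative ((\<lambda>q. q *\<^sub>R Qd c m t) \<circ> snd)) (at (\<xi>, t) within ?S)"
    by (rule diff_chain_within[OF has_derivative_snd[OF has_derivative_ident]]) (simp add: im d1)
  have d3: "((\<lambda>p. ?P (snd p) *v fst p) has_derivative
      (\<lambda>hq. ?P t *v fst hq + (snd hq *\<^sub>R Qd c m t) *v \<xi>)) (at (\<xi>, t) within ?S)"
    using bounded_bilinear.FDERIV[OF bb_mv d2 has_derivative_fst[OF has_derivative_ident]]
    by (simp add: o_def)
  have d4: "((\<lambda>p. fst p \<bullet> (?P (snd p) *v fst p)) has_derivative
      (\<lambda>hq. \<xi> \<bullet> (?P t *v fst hq + (snd hq *\<^sub>R Qd c m t) *v \<xi>) + fst hq \<bullet> (?P t *v \<xi>))) (at (\<xi>, t) within ?S)"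
    using bounded_bilinear.FDERIV[OF bounded_bilinear_inner has_derivative_fst[OF has_derivative_ident] d3]
    by simp
  have e1: "(\<lambda>(x, s). x \<bullet> (?P s *v x)) = (\<lambda>p. fst p \<bullet> (?P (snd p) *v fst p))"
    by (simp add: fun_eq_iff split_def)
  have e2: "(\<lambda>(h, q). (?P t *v \<xi> + transpose (?P t) *v \<xi>) \<bullet> h + (\<xi> \<bullet> (Qd c m t *v \<xi>)) * q)
     = (\<lambda>hq. \<xi> \<bullet> (?P t *v fst hq + (snd hq *\<^sub>R Qd c m t) *v \<xi>) + fst hq \<bullet> (?P t *v \<xi>))"
    by (auto simp: fun_eq_iff split_def inner_add_left inner_add_right transpose_matrix_vector dot_lmul_matrix
        scaleR_matrix_vector_assoc[symmetric] inner_vm inner_commute[of _ "Pmat k c m t *v \<xi>"])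
  show ?thesis unfolding e1 e2 by (rule d4)
qed

lemma Vx_cont: "continuous_on (UNIV \<times> {0..}) (\<lambda>(\<xi>, t). Pmat k c m t *v \<xi> + transpose (Pmat k c m t) *v \<xi>)"
proof -
  have pc: "continuous_on (UNIV \<times> {0::real..}) (\<lambda>p::(real^'n) \<times> real. Pmat k c m (snd p))"
    by (rule continuous_on_compose2[OF P_cont[OF mc mu cpos] continuous_on_snd]) auto
  have "continuous_on (UNIV \<times> {0..}) (\<lambda>p::(real^'n) \<times> real. Pmat k c m (snd p) *v fst p + transpose (Pmat k c m (snd p)) *v fst p)"
    by (intro continuous_on_add bounded_bilinear.continuous_on[OF bb_mv pc continuous_on_fst]
        bounded_bilinear.continuous_on[OF bb_tmv pc continuous_on_fst] continuous_on_id)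
  then show ?thesis by (simp add: split_def)
qed

lemma Vt_cont: "continuous_on (UNIV \<times> {0..}) (\<lambda>(\<xi>, t). \<xi> \<bullet> (Qd c m t *v \<xi>))"
proof -
  have pc: "continuous_on (UNIV \<times> {0::real..}) (\<lambda>p::(real^'n) \<times> real. Qd c m (snd p))"
    by (rule continuous_on_compose2[OF Qd_cont[OF mc mu cpos] continuous_on_snd]) auto
  have "continuous_on (UNIV \<times> {0..}) (\<lambda>p::(real^'n) \<times> real. fst p \<bullet> (Qd c m (snd p) *v fst p))"
    by (intro continuous_on_inner continuous_on_fst continuous_on_id
        bounded_bilinear.continuous_on[OF bb_mv pc continuous_on_fst])
  then show ?thesis by (simp add: split_def)
qed

lemma P_quad: "x \<bullet> (Pmat k c m t *v y) = k * (x \<bullet> y) + x \<bullet> (Qm c m t *v y)"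
  by (simp add: Pmat_Q matrix_vector_mult_add_rdistrib scaleR_matrix_vector_assoc[symmetric] inner_add_right)

lemma P_norm: "k \<ge> 0 \<Longrightarrow> norm (Pmat k c m t *v x) \<le> (k + c^2/2) * norm x"
proof (rule norm_from_inner)
  assume k: "k \<ge> 0"
  let ?v = "Pmat k c m t *v x"
  have h2: "?v \<bullet> (Qm c m t *v x) \<le> c^2/2 * (norm ?v * norm x)"
    using Q_bound[OF mc mu cpos, of ?v t x] by (rule abs_le_D1)
  have h1: "k * (?v \<bullet> x) \<le> k * (norm ?v * norm x)"
    using k by (intro mult_left_mono) (auto intro: order_trans[OF abs_ge_self Cauchy_Schwarz_ineq2])
  have "?v \<bullet> ?v = k * (?v \<bullet> x) + ?v \<bullet> (Qm c m t *v x)" by (rule P_quad)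
  also have "\<dots> \<le> k * (norm ?v * norm x) + c^2/2 * (norm ?v * norm x)" using h1 h2 by linarith
  also have "\<dots> = (k + c^2/2) * norm x * norm ?v" by (simp add: algebra_simps)
  finally show "?v \<bullet> ?v \<le> (k + c^2/2) * norm x * norm ?v" .
qed (use cpos in auto)

lemma PT_norm: "k \<ge> 0 \<Longrightarrow> norm (transpose (Pmat k c m t) *v x) \<le> (k + c^2/2) * norm x"
proof (rule norm_from_inner)
  assume k: "k \<ge> 0"
  let ?v = "transpose (Pmat k c m t) *v x"
  have e: "?v \<bullet> ?v = x \<bullet> (Pmat k c m t *v ?v)"
    by (simp add: transpose_matrix_vector dot_lmul_matrix)
  have h2: "x \<bullet> (Qm c m t *v ?v) \<le> c^2/2 * (norm x * norm ?v)"
    using Q_bound[OF mc mu cpos, of x t ?v] by (rule abs_le_D1)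
  have h1: "k * (x \<bullet> ?v) \<le> k * (norm x * norm ?v)"
    using k by (intro mult_left_mono) (auto intro: order_trans[OF abs_ge_self Cauchy_Schwarz_ineq2])
  have "?v \<bullet> ?v = k * (x \<bullet> ?v) + x \<bullet> (Qm c m t *v ?v)" unfolding e by (rule P_quad)
  also have "\<dots> \<le> k * (norm x * norm ?v) + c^2/2 * (norm x * norm ?v)" using h1 h2 by linarith
  also have "\<dots> = (k + c^2/2) * norm x * norm ?v" by (simp add: algebra_simps)
  finally show "?v \<bullet> ?v \<le> (k + c^2/2) * norm x * norm ?v" .
qed (use cpos in auto)

end


theorem lemma3:
  fixes f :: "real \<Rightarrow> real" and M :: "real \<Rightarrow> real" and fstar :: real
    and m :: "real \<Rightarrow> real^'n"
    and g :: "real^'n \<Rightarrow> real \<Rightarrow> real \<Rightarrow> real^'k^'n"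
    and Dg :: "'n \<Rightarrow> 'k \<Rightarrow> real^'n \<Rightarrow> real \<Rightarrow> real \<Rightarrow> real^'n"
    and \<alpha>' \<beta>' c K :: real
  assumes f_bdd: "bounded (range f)" and f_cont: "continuous_on UNIV f"
    and M_lim: "((\<lambda>s. M s / s) \<longlongrightarrow> 0) at_top"
    and fstar_neg: "fstar < 0"
    and f_avg: "((\<lambda>T. integral {-T..T} f / (2 * T)) \<longlongrightarrow> fstar) at_top"
    and f_dev: "\<And>t1 t2. t1 \<le> t2 \<Longrightarrow> \<bar>integral {t1..t2} (\<lambda>s. f s - fstar)\<bar> \<le> M (t2 - t1)"
    and m_cont: "continuous_on UNIV m" and m_unit: "\<And>t. norm (m t) = 1"
    and pos: "\<alpha>' > 0" "\<beta>' > 0" "c > 0"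
    and PE: "\<And>t. psd_le (\<alpha>' *\<^sub>R mat 1) (integral {t..t+c} (\<lambda>\<tau>. outer (m \<tau>)))
              \<and> psd_le (integral {t..t+c} (\<lambda>\<tau>. outer (m \<tau>))) (\<beta>' *\<^sub>R mat 1)"
    and g_bd: "\<And>t a x. a > 0 \<Longrightarrow> mat_norm2 (g x t (a * t)) \<le> \<beta>' * (1 + sqrt (norm x))"
    and g_cont: "continuous_on UNIV (\<lambda>(x, t, a). g x t a)"
    and g_C1: "\<And>i j x t a. ((\<lambda>y. g y t a $ i $ j) has_derivative (\<lambda>h. Dg i j x t a \<bullet> h)) (at x)"
    and Dg_cont: "\<And>i j t a. continuous_on UNIV (\<lambda>x. Dg i j x t a)"
    and K_gt: "K > 1"
    and Dg_bd: "\<And>i j x t a. t \<ge> 0 \<Longrightarrow> a > 0 \<Longrightarrow> norm (Dg i j x t (a * t)) \<le> K"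
  defines "V \<equiv> (\<lambda>x t. x \<bullet> (Pmat (kappa c fstar \<alpha>') c m t *v x))"
    and "F \<equiv> (\<lambda>x t. fstar *\<^sub>R (outer (m t) *v x))"
    and "W \<equiv> (\<lambda>x t. 2 * (x \<bullet> (Pmat (kappa c fstar \<alpha>') c m t *v x)) / \<alpha>')"
  shows "lyapunov_function V F \<and>
    (\<exists>Wx Wt c1 c2 c3. C1_partials W Wx Wt \<and> c1 > 0 \<and> c2 > 0 \<and> c3 > 0 \<and>
       (\<forall>\<xi> t. t \<ge> 0 \<longrightarrow>
          c1 * (norm \<xi>)\<^sup>2 \<le> W \<xi> t \<and> W \<xi> t \<le> c2 * (norm \<xi>)\<^sup>2 \<and>
          norm (Wx \<xi> t) \<le> c3 * norm \<xi> \<and>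
          Wt \<xi> t + Wx \<xi> t \<bullet> F \<xi> t \<le> - (norm \<xi>)\<^sup>2))"
proof -
  let ?k = "kappa c fstar \<alpha>'"
  let ?P = "Pmat ?k c m"
  have cpos: "c > 0" and apos: "\<alpha>' > 0" using pos by auto
  have kpos: "?k > 0"
    unfolding kappa_def using cpos apos fstar_neg
    by (intro add_pos_pos divide_pos_pos mult_pos_pos) auto
  have kc: "?k + c^2/2 > 0" using kpos by (intro add_pos_nonneg) auto
  define Vx where "Vx = (\<lambda>\<xi> t. ?P t *v \<xi> + transpose (?P t) *v \<xi>)"
  define Vt where "Vt = (\<lambda>(\<xi>::real^'n) t. \<xi> \<bullet> (Qd c m t *v \<xi>))"
  note L = m_cont m_unit cpos
  have C1V: "C1_partials V Vx Vt"
    unfolding C1_partials_def V_def Vx_def Vt_def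
    using V_der[OF L] Vx_cont[OF L] Vt_cont[OF L] by auto
  have Vquad: "V \<xi> t = ?k * (norm \<xi>)^2 + \<xi> \<bullet> (Qm c m t *v \<xi>)" for \<xi> t
    unfolding V_def P_quad[OF L] by (simp add: power2_norm_eq_inner)
  have Qup: "\<xi> \<bullet> (Qm c m t *v \<xi>) \<le> c^2/2 * (norm \<xi>)^2" for \<xi> t
    using abs_le_D1[OF Q_bound[OF L, of \<xi> t \<xi>]] by (simp add: power2_eq_square)
  have Qlo: "0 \<le> \<xi> \<bullet> (Qm c m t *v \<xi>)" for \<xi> t by (rule Q_nonneg[OF L])
  have Vx_bd: "norm (Vx \<xi> t) \<le> 2 * (?k + c^2/2) * norm \<xi>" for \<xi> t
  proof -
    have "norm (Vx \<xi> t) \<le> norm (?P t *v \<xi>) + norm (transpose (?P t) *v \<xi>)"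
      unfolding Vx_def by (rule norm_triangle_ineq)
    also have "\<dots> \<le> (?k + c^2/2) * norm \<xi> + (?k + c^2/2) * norm \<xi>"
      using P_norm[OF L, of ?k t \<xi>] PT_norm[OF L, of ?k t \<xi>] kpos by (intro add_mono) auto
    finally show ?thesis by (simp add: algebra_simps)
  qed
  have key: "Vt \<xi> t + Vx \<xi> t \<bullet> F \<xi> t \<le> - (\<alpha>' / 2) * (norm \<xi>)^2" if t: "t \<ge> 0" for \<xi> t
  proof -
    define y where "y = m t \<bullet> \<xi>"
    define a1 where "a1 = m t \<bullet> (Qm c m t *v \<xi>)"
    define a2 where "a2 = \<xi> \<bullet> (Qm c m t *v m t)"
    define Aq where "Aq = \<xi> \<bullet> (integral {t - c..t} (\<lambda>l. outer (m l)) *v \<xi>)"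
    have Aq: "Aq \<ge> \<alpha>' * (norm \<xi>)^2"
      using PE[of "t - c"] unfolding psd_le_def Aq_def
      by (auto simp: scaleR_matrix_vector_assoc[symmetric] power2_norm_eq_inner)
    have a1: "\<bar>a1\<bar> \<le> c^2/2 * norm \<xi>" using Q_bound[OF L, of "m t" t \<xi>] m_unit unfolding a1_def by simp
    have a2: "\<bar>a2\<bar> \<le> c^2/2 * norm \<xi>" using Q_bound[OF L, of \<xi> t "m t"] m_unit unfolding a2_def by simp
    have VtE: "Vt \<xi> t = c * y^2 - Aq"
      unfolding Vt_def Qd_def Aq_def y_def
      by (simp add: matrix_vector_mult_diff_rdistrib scaleR_matrix_vector_assoc[symmetric] inner_diff_right
          outer_mv power2_eq_square inner_commute)
    have FE: "F \<xi> t = (fstar * y) *\<^sub>R m t" unfolding F_def y_def outer_mv by simp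
    have e1: "(?P t *v \<xi>) \<bullet> m t = ?k * y + a1"
      unfolding inner_commute[of _ "m t"] P_quad[OF L] y_def a1_def ..
    have e2: "(transpose (?P t) *v \<xi>) \<bullet> m t = ?k * y + a2"
      unfolding transpose_matrix_vector dot_lmul_matrix P_quad[OF L] y_def a2_def by (simp add: inner_commute)
    have VxE: "Vx \<xi> t \<bullet> F \<xi> t = fstar * (y * (2 * ?k * y + a1 + a2))"
      unfolding FE Vx_def inner_add_left inner_scaleR_right e1 e2 by (simp add: algebra_simps)
    have "c * y^2 - Aq + (- (- fstar)) * (y * (2 * (c / (2 * \<bar>- (- fstar)\<bar>) + 1 / (4 * \<alpha>') * c ^ 4 * \<bar>- (- fstar)\<bar>) * y + a1 + a2))
       \<le> - (\<alpha>' / 2) * (norm \<xi>)^2"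
      by (rule key_ineq) (use apos fstar_neg cpos Aq a1 a2 in auto)
    then show ?thesis unfolding VtE VxE kappa_def by simp
  qed
  have part1: "lyapunov_function V F"
    unfolding lyapunov_function_def
  proof (intro exI conjI allI impI)
    show "C1_partials V Vx Vt" by (rule C1V)
    show "class_K_inf (\<lambda>r. ?k * r^2)" by (rule classK_sq[OF kpos])
    show "class_K_inf (\<lambda>r. (?k + c^2/2) * r^2)" by (rule classK_sq[OF kc])
    show "class_K (\<lambda>r. (\<alpha>'/2) * r^2)" using classK_sq[of "\<alpha>'/2"] apos unfolding class_K_inf_def by auto
    fix \<xi> :: "real^'n" and t :: real assume t: "t \<ge> 0"
    show "0 \<le> V \<xi> t" unfolding Vquad using Qlo[of \<xi> t] kpos by simp
    show "?k * (norm \<xi>)^2 \<le> V \<xi> t" unfolding Vquad using Qlo[of \<xi> t] by simp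
    show "V \<xi> t \<le> (?k + c^2/2) * (norm \<xi>)^2" unfolding Vquad using Qup[of \<xi> t] by (simp add: algebra_simps)
    show "Vt \<xi> t + Vx \<xi> t \<bullet> F \<xi> t \<le> - ((\<alpha>'/2) * (norm \<xi>)^2)" using key[OF t, of \<xi>] by simp
  qed
  define Wx where "Wx = (\<lambda>\<xi> t. (2 / \<alpha>') *\<^sub>R Vx \<xi> t)"
  define Wt where "Wt = (\<lambda>\<xi> t. 2 / \<alpha>' * Vt \<xi> t)"
  have WV: "W = (\<lambda>x t. 2 * V x t / \<alpha>')" unfolding W_def V_def ..
  have C1W: "C1_partials W Wx Wt"
    unfolding C1_partials_def
  proof (intro conjI allI impI)
    fix \<xi> :: "real^'n" and t :: real assume t: "t \<ge> 0"
    have d: "((\<lambda>(x, s). V x s) has_derivative (\<lambda>(h, k). Vx \<xi> t \<bullet> h + Vt \<xi> t * k)) (at (\<xi>, t) within UNIV \<times> {0..})"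
      using C1V t unfolding C1_partials_def by blast
    have "((\<lambda>p. 2 * (\<lambda>(x, s). V x s) p / \<alpha>') has_derivative (\<lambda>q. 2 * (\<lambda>(h, k). Vx \<xi> t \<bullet> h + Vt \<xi> t * k) q / \<alpha>'))
       (at (\<xi>, t) within UNIV \<times> {0..})"
      using has_derivative_mult_right[OF d, of "2 / \<alpha>'"] by (simp add: field_simps)
    moreover have "(\<lambda>p. 2 * (\<lambda>(x, s). V x s) p / \<alpha>') = (\<lambda>(x, s). W x s)" by (auto simp: WV)
    moreover have "(\<lambda>q. 2 * (\<lambda>(h, k). Vx \<xi> t \<bullet> h + Vt \<xi> t * k) q / \<alpha>') = (\<lambda>(h, k). Wx \<xi> t \<bullet> h + Wt \<xi> t * k)"
      by (rule ext, clarsimp simp: Wx_def Wt_def algebra_simps add_divide_distrib)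
    ultimately show "((\<lambda>(x, s). W x s) has_derivative (\<lambda>(h, k). Wx \<xi> t \<bullet> h + Wt \<xi> t * k)) (at (\<xi>, t) within UNIV \<times> {0..})"
      by simp
  next
    have "continuous_on (UNIV \<times> {0..}) (\<lambda>p. (2 / \<alpha>') *\<^sub>R (\<lambda>(\<xi>, t). Vx \<xi> t) p)"
      using C1V unfolding C1_partials_def by (intro continuous_intros) auto
    then show "continuous_on (UNIV \<times> {0..}) (\<lambda>(\<xi>, t). Wx \<xi> t)"
      by (simp add: Wx_def case_prod_unfold)
  next
    have "continuous_on (UNIV \<times> {0..}) (\<lambda>p. (2 / \<alpha>') * (\<lambda>(\<xi>, t). Vt \<xi> t) p)"
      using C1V unfolding C1_partials_def by (intro continuous_intros) auto
    then show "continuous_on (UNIV \<times> {0..}) (\<lambda>(\<xi>, t). Wt \<xi> t)"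
      by (simp add: Wt_def case_prod_unfold)
  qed
  have part2: "\<exists>Wx Wt c1 c2 c3. C1_partials W Wx Wt \<and> c1 > 0 \<and> c2 > 0 \<and> c3 > 0 \<and>
       (\<forall>\<xi> t. t \<ge> 0 \<longrightarrow>
          c1 * (norm \<xi>)\<^sup>2 \<le> W \<xi> t \<and> W \<xi> t \<le> c2 * (norm \<xi>)\<^sup>2 \<and>
          norm (Wx \<xi> t) \<le> c3 * norm \<xi> \<and>
          Wt \<xi> t + Wx \<xi> t \<bullet> F \<xi> t \<le> - (norm \<xi>)\<^sup>2)"
  proof (intro exI conjI allI impI)
    show "C1_partials W Wx Wt" by (rule C1W)
    show "2 * ?k / \<alpha>' > 0" using kpos apos by simp
    show "2 * (?k + c^2/2) / \<alpha>' > 0" using kc apos by simp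
    show "2 / \<alpha>' * (2 * (?k + c^2/2)) > 0" using kc apos by simp
    fix \<xi> :: "real^'n" and t :: real assume t: "t \<ge> 0"
    have Wq: "W \<xi> t = 2 * V \<xi> t / \<alpha>'" by (simp add: WV)
    show "2 * ?k / \<alpha>' * (norm \<xi>)^2 \<le> W \<xi> t"
      unfolding Wq Vquad using Qlo[of \<xi> t] apos by (simp add: divide_right_mono field_simps)
    show "W \<xi> t \<le> 2 * (?k + c^2/2) / \<alpha>' * (norm \<xi>)^2"
      unfolding Wq Vquad using Qup[of \<xi> t] apos by (simp add: divide_right_mono field_simps)
    have "norm (Wx \<xi> t) = 2 / \<alpha>' * norm (Vx \<xi> t)" using apos by (simp add: Wx_def)
    also have "\<dots> \<le> 2 / \<alpha>' * (2 * (?k + c^2/2) * norm \<xi>)"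
      by (rule mult_left_mono[OF Vx_bd]) (use apos in simp)
    finally show "norm (Wx \<xi> t) \<le> 2 / \<alpha>' * (2 * (?k + c^2/2)) * norm \<xi>"
      by (metis mult.assoc)
    have "Wt \<xi> t + Wx \<xi> t \<bullet> F \<xi> t = 2 / \<alpha>' * (Vt \<xi> t + Vx \<xi> t \<bullet> F \<xi> t)"
      unfolding Wt_def Wx_def by (simp add: algebra_simps)
    also have "\<dots> \<le> 2 / \<alpha>' * (- (\<alpha>' / 2) * (norm \<xi>)^2)"
      using key[OF t, of \<xi>] apos by (intro mult_left_mono) auto
    also have "\<dots> = - (norm \<xi>)\<^sup>2" using apos by simp
    finally show "Wt \<xi> t + Wx \<xi> t \<bullet> F \<xi> t \<le> - (norm \<xi>)\<^sup>2" .
  qed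
  show ?thesis using part1 part2 by blast
qed

end
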